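(* For all integers $n\ge3$ and $0\le m<n$, one has $L_e\le e_{n,m}\le U_e$, where \[ L_e=\frac{n-m+2}{n+m}e_{n-1,m-1}+\frac{n-m-2}{n-m}e_{n-1,m+1}+\frac{n-m-4}{n-m-2}\Bigl(\frac{2}{n-m}e_{n-2,m+2}+\frac{2}{n+m}e_{n-3,m+1}\Bigr), \] \[ U_e=\frac{n-m+2}{n+m}e_{n-1,m-1}+\frac{n-m-2}{n-m}e_{n-1,m+1}+\frac{2}{n-m}e_{n-2,m+2}+\frac{2}{n+m}e_{n-3,m+1}+\frac{4}{(n+m)(n+m-2)}e_{n-3,m-1}. \] Furthermore $U_e\le U_d\le d_{n,m}$, where $U_d$ is the expression $U_e$ with every $e$ replaced by $d$.
   Context: Define $c_{n,m}$ for integers $n,m\ge0$ by $c_{n,0}=1$ ($n\ge0$), $c_{n,m}=0$ ($n<m$), and $c_{n,m}=c_{n,m-1}+(m+1)c_{n-1,m}-(m-1)c_{n-2,m-1}$ for $n\ge m\ge1$ (the last term has coefficient $0$ when $m=1$); $c_{n,n}$ is the number of compacted binary trees of size $n$. Define $e_{n,m}=c_{(n+m)/2,(n-m)/2}/((n+m)/2)!$ for integers $n\ge m\ge0$ with $n-m$ even, and $e_{n,m}=0$ if $n-m$ is odd, if $m>n$, or if $m<0$. Define $d_{n,m}$ for $n\ge0$, $m\ge-1$ by $d_{0,0}=1$, $d_{0,m}=0$ ($m>0$), $d_{n,-1}=0$ ($n\ge0$), and $d_{n,m}=\frac{n-m+2}{n+m}d_{n-1,m-1}+d_{n-1,m+1}$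 for $n>0$, $m\ge0$ (equivalently, $d_{n,m}$ is the total weight of lattice paths from $(0,0)$ to $(n,m)$ with steps $(1,1),(1,-1)$ never below $y=0$, where an up step from $(a,b)$ has weight $(a-b+2)/(a+b+2)$). *)

theory Defs
  imports Complex_Main
begin

text \<open>c(n,m): c(n,0)=1, c(n,m)=0 for n<m, and for n \<ge> m \<ge> 1:
  c(n,m) = c(n,m-1) + (m+1) c(n-1,m) - (m-1) c(n-2,m-1).
  (For n = m = 1 the last term has coefficient 0, so truncated n-2 is harmless.)\<close>
function cc :: "nat \<Rightarrow> nat \<Rightarrow> int" where
  "cc n 0 = 1"
| "cc n (Suc k) = (if n < Suc k then 0
     else cc n k + int (k + 2) * cc (n - 1) (Suc k) - int k * cc (n - 2) k)"
  by pat_completeness auto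
termination by (relation "measure (\<lambda>(n, m). n + m)") auto

definition ee :: "int \<Rightarrow> int \<Rightarrow> real" where
  "ee n m = (if 0 \<le> m \<and> m \<le> n \<and> even (n - m)
     then of_int (cc (nat ((n + m) div 2)) (nat ((n - m) div 2))) / fact (nat ((n + m) div 2))
     else 0)"

text \<open>d(n,m): d(0,0)=1, d(0,m)=0 (m>0), d(n,-1)=0,
  d(n,m) = (n-m+2)/(n+m) d(n-1,m-1) + d(n-1,m+1) for n>0, m\<ge>0.
  (Values for m < -1 are never used; they are set to 0.)\<close>
fun dn :: "nat \<Rightarrow> int \<Rightarrow> real" where
  "dn 0 m = (if m = 0 then 1 else 0)"
| "dn (Suc n) m = (if m < 0 then 0
     else (of_int (int (Suc n) - m + 2) / of_int (int (Suc n) + m)) * dn n (m - 1) + dn n (m + 1))"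

definition dd :: "int \<Rightarrow> int \<Rightarrow> real" where
  "dd n m = dn (nat n) m"

end

theory Submission
  imports Defs
begin


lemma cc_lt: "p < q \<Longrightarrow> cc p q = 0"
  by (cases q) auto

lemma cc_rec: "Suc k \<le> p \<Longrightarrow> cc p (Suc k) = cc p k + int (k+2) * cc (p-1) (Suc k) - int k * cc (p-2) k"
  by simp

lemma cc_main: "0 \<le> cc p q \<and> (1 \<le> p \<longrightarrow> int (q+1) * cc (p-1) q \<le> cc p q)"
proof (induction q arbitrary: p)
  case 0
  then show ?case by simp
next
  case (Suc k)
  have I2: "int (Suc k+1) * cc (p-1) (Suc k) \<le> cc p (Suc k)" if "1 \<le> p" for p
  proof (cases "p < Suc k")
    case True
    then show ?thesis using cc_lt[of p "Suc k"] cc_lt[of "p-1" "Suc k"] that by (simp del: cc.simps)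
  next
    case False
    hence rec: "cc p (Suc k) = cc p k + int (k+2) * cc (p-1) (Suc k) - int k * cc (p-2) k" by simp
    have "int k * cc (p-2) k \<le> cc p k"
    proof (cases k)
      case 0 then show ?thesis using Suc.IH[of p] by simp
    next
      case (Suc j)
      have p2: "2 \<le> p" using False Suc by simp
      have h1: "int (k+1) * cc (p-1) k \<le> cc p k" using Suc.IH[of p] p2 by simp
      have h2: "int (k+1) * cc (p-2) k \<le> cc (p-1) k" using Suc.IH[of "p-1"] p2
        by (simp add: numeral_2_eq_2)
      have h3: "0 \<le> cc (p-2) k" using Suc.IH by simp
      have "int k * cc (p-2) k \<le> int (k+1) * cc (p-2) k" using h3 by (simp add: mult_right_mono)
      also have "\<dots> \<le> cc (p-1) k" by (rule h2)
      also have "\<dots> \<le> int (k+1) * cc (p-1) k" using Suc.IH[of "p-1"]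
        by (simp add: mult_right_mono distrib_right)
      also have "\<dots> \<le> cc p k" by (rule h1)
      finally show ?thesis .
    qed
    then show ?thesis using rec by simp
  qed
  have nn: "0 \<le> cc p (Suc k)" for p
  proof (induction p)
    case 0 then show ?case by simp
  next
    case (Suc p)
    have "0 \<le> int (Suc k+1) * cc p (Suc k)" using Suc by simp
    also have "\<dots> \<le> cc (Suc p) (Suc k)" using I2[of "Suc p"] by simp
    finally show ?case .
  qed
  show ?case using I2 nn by blast
qed

lemma cc_nonneg: "0 \<le> cc p q" using cc_main by blast
lemma cc_I2: "1 \<le> p \<Longrightarrow> int (q+1) * cc (p-1) q \<le> cc p q" using cc_main by blast

lemma ee_pq: "N = int p + int q \<Longrightarrow> M = int p - int q \<Longrightarrow> ee N M = cc p q / fact p"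
proof -
  assume N: "N = int p + int q" and M: "M = int p - int q"
  show ?thesis
  proof (cases "q \<le> p")
    case True
    have a: "(N + M) div 2 = int p" using N M by simp
    have b: "(N - M) div 2 = int q" using N M by simp
    show ?thesis unfolding ee_def using True N M a b by simp
  next
    case False
    then show ?thesis unfolding ee_def using N M cc_lt[of p q] by simp
  qed
qed

lemma ee_zero: assumes "\<not> (0 \<le> M \<and> M \<le> N \<and> even (N - M))" shows "ee N M = 0"
  unfolding ee_def by (rule if_not_P[OF assms])

lemma ee_nonneg: "0 \<le> ee N M"
  unfolding ee_def using cc_nonneg by simp

lemma ee_obtain:
  assumes "0 \<le> M" "M \<le> N" "even (N - M)"
  obtains p q where "N = int p + int q" "M = int p - int q" "q \<le> p"
proof -
  obtain j where j: "N - M = 2 * j" using assms(3) by blast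
  have "j \<ge> 0" using j assms by simp
  define q where "q = nat j"
  define p where "p = nat (M + j)"
  have "N = int p + int q" "M = int p - int q" "q \<le> p" using j assms `j \<ge> 0` unfolding p_def q_def by auto
  then show ?thesis using that by blast
qed



lemma two_frac: "(2*x+2)/(2*y+2) = ((x::real)+1)/(y+1)"
proof -
  have "(2*x+2)/(2*y+2) = (2*(x+1))/(2*(y+1))" by (simp add: algebra_simps)
  also have "\<dots> = (x+1)/(y+1)" by (rule mult_divide_mult_cancel_left) simp
  finally show ?thesis .
qed

lemma alg_rec: fixes x a b c F r k :: real assumes "r > 0" "F > 0" "x = b + (k+2)*a - k*c"
  shows "x/((r+1)*r*F) = (k+2)/(r+1) * (a/(r*F)) + b/((r+1)*r*F) - k/((r+1)*r) * (c/F)"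
proof -
  have 1: "(k+2)/(r+1) * (a/(r*F)) = (k+2)*a/((r+1)*r*F)" by (simp add: mult.assoc)
  have 2: "k/((r+1)*r) * (c/F) = k*c/((r+1)*r*F)" by simp
  show ?thesis unfolding 1 2 assms(3) by (simp add: add_divide_distrib diff_divide_distrib)
qed

lemma ee_I2:
  assumes "0 \<le> N"
  shows "real_of_int (N - M + 2) / real_of_int (N + M) * ee (N-1) (M-1) \<le> ee N M"
proof (cases "0 \<le> M-1 \<and> M-1 \<le> N-1 \<and> even ((N-1)-(M-1))")
  case False
  then show ?thesis using ee_zero[OF False] ee_nonneg[of N M] by simp
next
  case True
  then obtain p q where pq: "N-1 = int p + int q" "M-1 = int p - int q" "q \<le> p"
    using ee_obtain[of "M-1" "N-1"] by blast
  have e1: "ee (N-1) (M-1) = cc p q / fact p" using ee_pq[OF pq(1,2)] .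
  have e0: "ee N M = cc (Suc p) q / fact (Suc p)" using pq by (intro ee_pq) auto
  have c1: "real_of_int (N - M + 2) / real_of_int (N + M) = (real q + 1) / (real p + 1)"
  proof -
    have "real_of_int (N - M + 2) = 2 * (real q + 1)" "real_of_int (N + M) = 2 * (real p + 1)"
      using pq by simp_all
    then show ?thesis by (simp only:) (rule mult_divide_mult_cancel_left, simp)
  qed
  have I0: "int (q+1) * cc p q \<le> cc (Suc p) q" using cc_I2[of "Suc p" q] by simp
  have I1: "real_of_int (int (q+1) * cc p q) \<le> real_of_int (cc (Suc p) q)"
    using I0 by (simp only: of_int_le_iff)
  have I: "real (q+1) * cc p q \<le> cc (Suc p) q" using I1 by simp
  have "real_of_int (N - M + 2) / real_of_int (N + M) * ee (N-1) (M-1)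
      = real (q+1) * cc p q / fact (Suc p)"
    unfolding c1 e1 by (simp add: field_simps)
  also have "\<dots> \<le> cc (Suc p) q / fact (Suc p)"
    using I by (simp add: divide_right_mono)
  finally show ?thesis using e0 by simp
qed

lemma ee_rec:
  assumes "1 \<le> N" "0 \<le> M"
  shows "ee N M = real_of_int (N-M+2) / real_of_int (N+M) * ee (N-1) (M-1) + ee (N-1) (M+1)
     - real_of_int (2*(N-M-2)) / real_of_int ((N+M)*(N+M-2)) * ee (N-3) (M-1)"
proof -
  consider "odd (N-M) \<or> M > N" | "M = N" | "even (N-M)" "M < N" by linarith
  then show ?thesis
  proof cases
    case 1
    then show ?thesis using ee_zero[of M N] ee_zero[of "M-1" "N-1"] ee_zero[of "M+1" "N-1"]
      ee_zero[of "M-1" "N-3"] by auto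
  next
    case 2
    have n: "N = int (nat N) + int 0" "M = int (nat N) - int 0" using 2 assms by auto
    have n1: "N - 1 = int (nat N - 1) + int 0" "M - 1 = int (nat N - 1) - int 0" using 2 assms by auto
    have z1: "ee (N-1) (M+1) = 0" using 2 by (intro ee_zero) auto
    have z2: "ee (N-3) (M-1) = 0" using 2 by (intro ee_zero) auto
    obtain N' where N': "nat N = Suc N'" using assms by (cases "nat N") auto
    have f: "fact (nat N) = real (nat N) * fact (nat N - 1)"
      unfolding N' by simp
    have c: "real_of_int (N - M + 2) / real_of_int (N + M) = 1 / real (nat N)"
      using 2 assms by simp
    show ?thesis unfolding ee_pq[OF n] ee_pq[OF n1] z1 z2 c f by simp
  next
    case 3
    then obtain p q where pq: "N = int p + int q" "M = int p - int q" "q \<le> p"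
      using ee_obtain[of M N] assms by auto
    obtain k where k: "q = Suc k" using pq 3 by (cases q) auto
    obtain r where r: "p = Suc r" using pq k by (cases p) auto
    have e0: "ee N M = cc (Suc r) (Suc k) / fact (Suc r)" using pq k r by (intro ee_pq) auto
    have e1: "ee (N-1) (M-1) = cc r (Suc k) / fact r" using pq k r by (intro ee_pq) auto
    have e2: "ee (N-1) (M+1) = cc (Suc r) k / fact (Suc r)" using pq k r by (intro ee_pq) auto
    have c1: "real_of_int (N-M+2) / real_of_int (N+M) = (real k+2)/(real r+1)"
    proof -
      have "real_of_int (N-M+2) = 2 * (real k + 2)" "real_of_int (N+M) = 2 * (real r + 1)"
        using pq k r by simp_all
      then show ?thesis by (simp only:) (rule mult_divide_mult_cancel_left, simp)
    qed
    have rec: "real_of_int (cc (Suc r) (Suc k)) = cc (Suc r) k + real (k+2) * cc r (Suc k) - real k * cc (r-1) k"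
      using cc_rec[of k "Suc r"] pq k r by simp
    show ?thesis
    proof (cases r)
      case 0
      then have "k = 0" using pq k r by simp
      then show ?thesis unfolding e0 e1 e2 c1 rec using 0 pq k r by simp
    next
      case (Suc r')
      have e3: "ee (N-3) (M-1) = cc r' k / fact r'" using pq k r Suc by (intro ee_pq) auto
      have c2: "real_of_int (2*(N-M-2)) / real_of_int ((N+M)*(N+M-2)) = real k / ((real r+1)*real r)"
      proof -
        have sNM: "N+M = 2*int r + 2" using pq k r by simp
        have "real_of_int ((N+M)*(N+M-2)) = (2*real r+2)*(2*real r)" unfolding sNM by simp
        also have "\<dots> = 4 * ((real r+1)*real r)" by (simp add: algebra_simps)
        finally have d: "real_of_int ((N+M)*(N+M-2)) = 4 * ((real r+1)*real r)" .
        have "real_of_int (2*(N-M-2)) = 4 * real k" using pq k r by simp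
        note this d
        then show ?thesis by (simp only:) (rule mult_divide_mult_cancel_left, simp)
      qed
      have f1: "fact r = real r * fact r'" using Suc by simp
      have f2: "fact (Suc r) = (real r + 1) * real r * fact r'" using Suc by (simp add: algebra_simps)
      have rec': "real_of_int (cc (Suc r) (Suc k)) = cc (Suc r) k + (real k+2) * cc r (Suc k) - real k * cc r' k"
        using rec Suc by simp
      show ?thesis unfolding e0 e1 e2 e3 c1 c2 f1 f2
        by (rule alg_rec[OF _ _ rec']) (use Suc in auto)
    qed
  qed
qed

lemma upper_id:
  fixes s t u E A B C D F G r1 r2 cA cB cF :: real
  assumes s: "s \<noteq> 0" and t: "t \<noteq> 0" "u \<noteq> 0"
    and e0: "E = cA*A + B - 2*(s-2)/(t*u)*F"
    and e1: "B = s/t*G + C - r1"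
    and e2: "G = s/u*F + D - r2"
  shows "E = cA*A + (s-2)/s*B + 2/s*C + 2/t*D + 4/(t*u)*F - 2/t*r2 - 2/s*r1"
proof -
  have "E - (cA*A + (s-2)/s*B) = 2/s*B - 2*(s-2)/(t*u)*F"
    unfolding e0 using s t by (simp add: field_simps)
  also have "\<dots> = 2/t*G + 2/s*C - 2/s*r1 - 2*(s-2)/(t*u)*F"
    unfolding e1 using s t by (simp add: field_simps)
  also have "\<dots> = 2/s*C + 2/t*D + 4/(t*u)*F - 2/t*r2 - 2/s*r1"
    unfolding e2 using s t by (simp add: field_simps)
  finally show ?thesis by simp
qed

lemma d_id:
  fixes s t E A B C D F G cA :: real
  assumes s: "s \<noteq> 0" and t: "t \<noteq> 0" "u \<noteq> 0"
    and e0: "E = cA*A + B"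
    and e1: "B = s/t*G + C"
    and e2: "G = s/u*F + D"
  shows "E = cA*A + (s-2)/s*B + 2/s*C + 2/t*D + 4/(t*u)*F + (2*s-4)/(t*u)*F"
proof -
  have "E - (cA*A + (s-2)/s*B) = 2/s*B"
    unfolding e0 using s by (simp add: field_simps)
  also have "\<dots> = 2/t*G + 2/s*C"
    unfolding e1 using s t by (simp add: field_simps)
  also have "\<dots> = 2/s*C + 2/t*D + 4/(t*u)*F + (2*s-4)/(t*u)*F"
    unfolding e2 using s t by (simp add: field_simps)
  finally show ?thesis by simp
qed

lemma lower_alg:
  fixes p s t u w E X C D F H K r1 r2 :: real
  assumes p: "2 \<le> p" and s: "0 < s" and tp: "0 < t" "0 < u" "0 \<le> w"
    and eq: "E = X + 2/s*C + 2/t*D + 4/(t*u)*F - 2/t*r2 - 2/s*r1"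
    and r1: "r1 = 2*(p-2)/(t*u)*H" and r2: "r2 = 2*(p-2)/(u*w)*K"
    and i1: "p/t*D \<le> C" and i2: "p/u*H \<le> D" and i3: "p/w*K \<le> H"
    and nn: "0 \<le> D" "0 \<le> H" "0 \<le> K" "0 \<le> C" "0 \<le> F"
  shows "X + (p-2)/p*(2/s*C + 2/t*D) \<le> E"
proof -
  have sp: "p > 0" using p by auto
  have G1: "r1 \<le> 2/p*C"
  proof -
    have "r1 \<le> 2*p/(t*u)*H" unfolding r1 using nn tp p
      by (intro mult_right_mono divide_right_mono) auto
    also have "\<dots> = (2/p*(p/t)) * (p/u*H)" using sp tp by (simp add: field_simps)
    also have "\<dots> \<le> (2/p*(p/t)) * D" using i2 sp tp by (intro mult_left_mono) auto
    also have "\<dots> = 2/p * (p/t*D)" by simp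
    also have "\<dots> \<le> 2/p*C" using i1 sp by (intro mult_left_mono) auto
    finally show ?thesis .
  qed
  have G2: "r2 \<le> 2/p*D"
  proof (cases "w = 0")
    case True
    then show ?thesis using r2 nn sp by simp
  next
    case False
    then have t4: "w > 0" using tp by simp
    have "r2 \<le> 2*p/(u*w)*K" unfolding r2 using nn tp t4 p
      by (intro mult_right_mono divide_right_mono) auto
    also have "\<dots> = (2/p*(p/u)) * (p/w*K)" using sp tp t4 by (simp add: field_simps)
    also have "\<dots> \<le> (2/p*(p/u)) * H" using i3 sp tp by (intro mult_left_mono) auto
    also have "\<dots> = 2/p * (p/u*H)" by simp
    also have "\<dots> \<le> 2/p*D" using i2 sp by (intro mult_left_mono) auto
    finally show ?thesis .
  qed
  have c: "(p-2)/p = 1 - 2/p" using sp by (simp add: field_simps)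
  have "2/s*r1 \<le> 2/s*(2/p*C)" using G1 s by (intro mult_left_mono) auto
  moreover have "2/t*r2 \<le> 2/t*(2/p*D)" using G2 tp by (intro mult_left_mono) auto
  moreover have "0 \<le> 4/(t*u)*F" using tp nn by simp
  moreover have "E - (X + (p-2)/p*(2/s*C + 2/t*D)) = (2/s*(2/p*C) - 2/s*r1) + (2/t*(2/p*D) - 2/t*r2) + 4/(t*u)*F"
    unfolding eq using sp s tp by (simp add: field_simps)
  ultimately show ?thesis by linarith
qed

lemma R_nonneg:
  assumes "1 \<le> N" "0 \<le> M"
  shows "0 \<le> real_of_int (2*(N-M-2)) / real_of_int ((N+M)*(N+M-2)) * ee (N-3) (M-1)"
proof (cases "ee (N-3) (M-1) = 0")
  case True then show ?thesis by simp
next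
  case False
  then have h: "0 \<le> M-1" "M-1 \<le> N-3" using ee_zero[of "M-1" "N-3"] by auto
  have "0 \<le> real_of_int (2*(N-M-2))" using h by simp
  moreover have "0 \<le> real_of_int ((N+M)*(N+M-2))" using h by simp
  ultimately show ?thesis using ee_nonneg by simp
qed

lemma dn_zero: "dn n m \<noteq> 0 \<Longrightarrow> 0 \<le> m \<and> m \<le> int n \<and> even (int n - m)"
proof (induction n arbitrary: m)
  case 0
  then show ?case by (simp split: if_splits)
next
  case (Suc n)
  then have m: "0 \<le> m" by (simp split: if_splits)
  then have "dn n (m-1) \<noteq> 0 \<or> dn n (m+1) \<noteq> 0" using Suc.prems by auto
  then show ?case
  proof
    assume "dn n (m-1) \<noteq> 0"
    from Suc.IH[OF this] show ?thesis using m by auto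
  next
    assume "dn n (m+1) \<noteq> 0"
    from Suc.IH[OF this] show ?thesis using m by auto
  qed
qed

lemma dn_nonneg: "0 \<le> dn n m"
proof (induction n arbitrary: m)
  case 0 then show ?case by simp
next
  case (Suc n)
  show ?case
  proof (cases "m < 0")
    case True then show ?thesis by simp
  next
    case False
    have "0 \<le> real_of_int (int (Suc n) - m + 2) / real_of_int (int (Suc n) + m) * dn n (m - 1)"
    proof (cases "dn n (m-1) = 0")
      case True then show ?thesis by simp
    next
      case F: False
      from dn_zero[OF F] have "m - 1 \<le> int n" by simp
      then show ?thesis using Suc.IH[of "m-1"] False by simp
    qed
    then show ?thesis using False Suc.IH[of "m+1"] by simp
  qed
qed

lemma dd_nonneg: "0 \<le> dd N M" unfolding dd_def by (rule dn_nonneg)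

lemma dd_zero: "0 \<le> N \<Longrightarrow> \<not> (0 \<le> M \<and> M \<le> N \<and> even (N - M)) \<Longrightarrow> dd N M = 0"
  unfolding dd_def using dn_zero[of "nat N" M] by auto

lemma dd_rec:
  assumes "1 \<le> N" "0 \<le> M"
  shows "dd N M = real_of_int (N-M+2) / real_of_int (N+M) * dd (N-1) (M-1) + dd (N-1) (M+1)"
proof -
  have n: "nat N = Suc (nat (N-1))" using assms by simp
  have i: "int (Suc (nat (N-1))) = N" using assms by simp
  show ?thesis unfolding dd_def n using assms by (simp only: dn.simps i) (simp add: nat_diff_distrib)
qed

lemma ee_le_dd_nat: "ee (int n) M \<le> dd (int n) M"
proof (induction n arbitrary: M)
  case 0
  show ?case
  proof (cases "M = 0")
    case True
    have "ee 0 0 = cc 0 0 / fact 0" by (rule ee_pq) auto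
    then show ?thesis using True by (simp add: dd_def)
  next
    case False
    then show ?thesis using ee_zero[of M 0] by (simp add: dd_def)
  qed
next
  case (Suc n)
  show ?case
  proof (cases "M < 0")
    case True
    then show ?thesis using ee_zero[of M "int (Suc n)"] dd_nonneg by simp
  next
    case False
    let ?N = "int (Suc n)"
    have N1: "?N - 1 = int n" by simp
    have er: "ee ?N M \<le> real_of_int (?N-M+2) / real_of_int (?N+M) * ee (int n) (M-1) + ee (int n) (M+1)"
      using ee_rec[of ?N M] R_nonneg[of ?N M] False unfolding N1 by simp
    have dr: "dd ?N M = real_of_int (?N-M+2) / real_of_int (?N+M) * dd (int n) (M-1) + dd (int n) (M+1)"
      using dd_rec[of ?N M] False unfolding N1 by simp
    have a: "real_of_int (?N-M+2) / real_of_int (?N+M) * ee (int n) (M-1)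
        \<le> real_of_int (?N-M+2) / real_of_int (?N+M) * dd (int n) (M-1)"
    proof (cases "M - 1 \<le> int n")
      case True
      then have "0 \<le> real_of_int (?N-M+2) / real_of_int (?N+M)" using False by simp
      then show ?thesis using Suc.IH[of "M-1"] by (rule mult_left_mono[rotated])
    next
      case F: False
      then show ?thesis using ee_zero[of "M-1" "int n"] dd_zero[of "int n" "M-1"] by simp
    qed
    show ?thesis using er dr a Suc.IH[of "M+1"] by linarith
  qed
qed

lemma ee_le_dd: "0 \<le> N \<Longrightarrow> ee N M \<le> dd N M"
  using ee_le_dd_nat[of "nat N" M] by simp



lemma ee_rec_inst:
  assumes "1 \<le> N" "0 \<le> M" "N1 = N-1" "Mm = M-1" "Mp = M+1" "N3 = N-3"
    "real_of_int (N-M) = \<sigma>" "real_of_int (N+M) = \<tau>" "real_of_int (N+M-2) = \<upsilon>"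
  shows "ee N M = (\<sigma>+2)/\<tau> * ee N1 Mm + ee N1 Mp - 2*(\<sigma>-2)/(\<tau>*\<upsilon>) * ee N3 Mm
    \<and> 0 \<le> 2*(\<sigma>-2)/(\<tau>*\<upsilon>) * ee N3 Mm"
proof -
  have c1: "real_of_int (N-M+2) / real_of_int (N+M) = (\<sigma>+2)/\<tau>" using assms(7,8) by simp
  have c2: "real_of_int (2*(N-M-2)) / real_of_int ((N+M)*(N+M-2)) = 2*(\<sigma>-2)/(\<tau>*\<upsilon>)"
    using assms(7-9) by simp
  show ?thesis using ee_rec[OF assms(1,2)] R_nonneg[OF assms(1,2)] unfolding c1 c2 assms(3-6)
    by simp
qed

lemma dd_rec_inst:
  assumes "1 \<le> N" "0 \<le> M" "N1 = N-1" "Mm = M-1" "Mp = M+1"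
    "real_of_int (N-M) = \<sigma>" "real_of_int (N+M) = \<tau>"
  shows "dd N M = (\<sigma>+2)/\<tau> * dd N1 Mm + dd N1 Mp"
proof -
  have c1: "real_of_int (N-M+2) / real_of_int (N+M) = (\<sigma>+2)/\<tau>" using assms(6,7) by simp
  show ?thesis using dd_rec[OF assms(1,2)] unfolding c1 assms(3-5) by simp
qed

lemma ee_I2_inst:
  assumes "0 \<le> N" "N1 = N-1" "Mm = M-1"
    "real_of_int (N-M) = \<sigma>" "real_of_int (N+M) = \<tau>"
  shows "(\<sigma>+2)/\<tau> * ee N1 Mm \<le> ee N M"
proof -
  have c1: "real_of_int (N-M+2) / real_of_int (N+M) = (\<sigma>+2)/\<tau>" using assms(4,5) by simp
  show ?thesis using ee_I2[OF assms(1), of M] unfolding c1 assms(2,3) by simp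
qed

theorem lemma5p1:
  fixes n m :: int
  assumes "3 \<le> n" and "0 \<le> m" and "m < n"
  shows "(n - m + 2) / (n + m) * ee (n - 1) (m - 1) + (n - m - 2) / (n - m) * ee (n - 1) (m + 1)
           + (n - m - 4) / (n - m - 2) * (2 / (n - m) * ee (n - 2) (m + 2) + 2 / (n + m) * ee (n - 3) (m + 1))
         \<le> ee n m
       \<and> ee n m \<le>
           (n - m + 2) / (n + m) * ee (n - 1) (m - 1) + (n - m - 2) / (n - m) * ee (n - 1) (m + 1)
           + 2 / (n - m) * ee (n - 2) (m + 2) + 2 / (n + m) * ee (n - 3) (m + 1)
           + 4 / ((n + m) * (n + m - 2)) * ee (n - 3) (m - 1)
       \<and> (n - m + 2) / (n + m) * ee (n - 1) (m - 1) + (n - m - 2) / (n - m) * ee (n - 1) (m + 1)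
           + 2 / (n - m) * ee (n - 2) (m + 2) + 2 / (n + m) * ee (n - 3) (m + 1)
           + 4 / ((n + m) * (n + m - 2)) * ee (n - 3) (m - 1)
         \<le> (n - m + 2) / (n + m) * dd (n - 1) (m - 1) + (n - m - 2) / (n - m) * dd (n - 1) (m + 1)
           + 2 / (n - m) * dd (n - 2) (m + 2) + 2 / (n + m) * dd (n - 3) (m + 1)
           + 4 / ((n + m) * (n + m - 2)) * dd (n - 3) (m - 1)
       \<and> (n - m + 2) / (n + m) * dd (n - 1) (m - 1) + (n - m - 2) / (n - m) * dd (n - 1) (m + 1)
           + 2 / (n - m) * dd (n - 2) (m + 2) + 2 / (n + m) * dd (n - 3) (m + 1)
           + 4 / ((n + m) * (n + m - 2)) * dd (n - 3) (m - 1)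
         \<le> dd n m"
proof -
  define s where "s = real_of_int (n-m)"
  define t where "t = real_of_int (n+m)"
  define u where "u = real_of_int (n+m-2)"
  define w where "w = real_of_int (n+m-4)"
  have s1: "1 \<le> s" using assms unfolding s_def by simp
  have t3: "3 \<le> t" using assms unfolding t_def by simp
  have u1: "1 \<le> u" using assms unfolding u_def by simp
  have tu: "u = t - 2" unfolding t_def u_def by simp
  have cf0: "real_of_int (n - m + 2) / real_of_int (n + m) = (s+2)/t" unfolding s_def t_def by simp
  have cf1: "real_of_int (n - m - 2) / real_of_int (n - m) = (s-2)/s" unfolding s_def by simp
  have cf2: "2 / real_of_int (n - m) = 2/s" unfolding s_def by simp
  have cf3: "2 / real_of_int (n + m) = 2/t" unfolding t_def by simp
  have cf4: "4 / real_of_int ((n + m) * (n + m - 2)) = 4/(t*u)" unfolding t_def u_def by simp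
  have cf5: "real_of_int (n - m - 4) / real_of_int (n - m - 2) = (s-4)/(s-2)" unfolding s_def by simp
  define E where "E = ee n m"
  define A where "A = ee (n-1) (m-1)"
  define B where "B = ee (n-1) (m+1)"
  define C where "C = ee (n-2) (m+2)"
  define D where "D = ee (n-3) (m+1)"
  define F where "F = ee (n-3) (m-1)"
  define G where "G = ee (n-2) m"
  define H where "H = ee (n-4) m"
  define K where "K = ee (n-5) (m-1)"
  define r1 where "r1 = 2*(s-4)/(t*u)*H"
  define r2 where "r2 = 2*(s-4)/(u*w)*K"
  have E0: "E = (s+2)/t*A + B - 2*(s-2)/(t*u)*F"
    using ee_rec_inst[of n m "n-1" "m-1" "m+1" "n-3" s t u] assms
    unfolding E_def A_def B_def F_def s_def t_def u_def by simp
  have E1: "B = s/t*G + C - r1 \<and> 0 \<le> r1"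
    using ee_rec_inst[of "n-1" "m+1" "n-2" m "m+2" "n-4" "s-2" t u] assms
    unfolding B_def C_def G_def H_def r1_def s_def t_def u_def by (simp add: algebra_simps)
  have E2: "G = s/u*F + D - r2 \<and> 0 \<le> r2"
    using ee_rec_inst[of "n-2" m "n-3" "m-1" "m+1" "n-5" "s-2" u w] assms
    unfolding G_def D_def F_def K_def r2_def s_def u_def w_def by (simp add: algebra_simps)
  have up: "E = (s+2)/t*A + (s-2)/s*B + 2/s*C + 2/t*D + 4/(t*u)*F - 2/t*r2 - 2/s*r1"
    using upper_id[of s t u E "(s+2)/t" A B F G C r1 D r2] E0 E1 E2 s1 t3 u1 by simp
  have part2: "E \<le> (s+2)/t*A + (s-2)/s*B + 2/s*C + 2/t*D + 4/(t*u)*F"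
  proof -
    have "0 \<le> 2/t*r2" "0 \<le> 2/s*r1" using E1 E2 s1 t3 by simp_all
    then show ?thesis using up by linarith
  qed
  have Cn: "0 \<le> C" "0 \<le> D" "0 \<le> F" "0 \<le> H" "0 \<le> K" "0 \<le> B"
    unfolding C_def D_def F_def H_def K_def B_def by (simp_all add: ee_nonneg)
  have I0: "(s+2)/t*A \<le> E"
    using ee_I2_inst[of n "n-1" "m-1" m s t] assms unfolding E_def A_def s_def t_def by simp
  have part1: "(s+2)/t*A + (s-2)/s*B + (s-4)/(s-2)*(2/s*C + 2/t*D) \<le> E"
  proof (cases "4 \<le> n - m \<and> even (n - m)")
    case True
    have s4: "4 \<le> s" using True unfolding s_def by simp
    have w0: "0 \<le> w" using True assms unfolding w_def by simp
    have i1: "(s-2)/t*D \<le> C"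
      using ee_I2_inst[of "n-2" "n-3" "m+1" "m+2" "s-4" t] assms True
      unfolding C_def D_def s_def t_def by (simp add: algebra_simps)
    have i2: "(s-2)/u*H \<le> D"
      using ee_I2_inst[of "n-3" "n-4" m "m+1" "s-4" u] assms True
      unfolding H_def D_def s_def u_def by (simp add: algebra_simps)
    have i3: "(s-2)/w*K \<le> H"
      using ee_I2_inst[of "n-4" "n-5" "m-1" m "s-4" w] assms True
      unfolding H_def K_def s_def w_def by (simp add: algebra_simps)
    have r1': "r1 = 2*((s-2)-2)/(t*u)*H" unfolding r1_def by simp
    have r2': "r2 = 2*((s-2)-2)/(u*w)*K" unfolding r2_def by simp
    have "(s+2)/t*A + (s-2)/s*B + ((s-2)-2)/(s-2)*(2/s*C + 2/t*D) \<le> E"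
      by (rule lower_alg[OF _ _ _ _ w0 up r1' r2' i1 i2 i3 Cn(2,4,5,1,3)]) (use s4 t3 u1 in auto)
    then show ?thesis by simp
  next
    case False
    have z: "(s-2)/s*B = 0 \<and> C = 0 \<and> D = 0"
    proof (cases "even (n - m)")
      case True
      then have "n - m = 2" using False assms by presburger
      then show ?thesis unfolding s_def B_def C_def D_def using ee_zero by simp
    next
      case F: False
      then show ?thesis unfolding s_def B_def C_def D_def using ee_zero by simp
    qed
    then have "(s-2)/s*B = 0" "C = 0" "D = 0" by auto
    then show ?thesis using I0 by (simp only: add_0_right mult_zero_right)
  qed
  define Ad where "Ad = dd (n-1) (m-1)"
  define Bd where "Bd = dd (n-1) (m+1)"
  define Cd where "Cd = dd (n-2) (m+2)"
  define Dd where "Dd = dd (n-3) (m+1)"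
  define Fd where "Fd = dd (n-3) (m-1)"
  define Gd where "Gd = dd (n-2) m"
  define Ed where "Ed = dd n m"
  have part3: "(s+2)/t*A + (s-2)/s*B + 2/s*C + 2/t*D + 4/(t*u)*F
      \<le> (s+2)/t*Ad + (s-2)/s*Bd + 2/s*Cd + 2/t*Dd + 4/(t*u)*Fd"
  proof -
    have "(s+2)/t*A \<le> (s+2)/t*Ad" unfolding A_def Ad_def using ee_le_dd[of "n-1" "m-1"] assms s1 t3
      by (intro mult_left_mono) auto
    moreover have "(s-2)/s*B \<le> (s-2)/s*Bd"
    proof (cases "2 \<le> s")
      case True
      then show ?thesis unfolding B_def Bd_def using ee_le_dd[of "n-1" "m+1"] assms
        by (intro mult_left_mono) auto
    next
      case False
      then have "n - m < 2" unfolding s_def by simp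
      then show ?thesis unfolding B_def Bd_def using ee_zero[of "m+1" "n-1"] dd_zero[of "n-1" "m+1"] assms
        by simp
    qed
    moreover have "2/s*C \<le> 2/s*Cd" unfolding C_def Cd_def using ee_le_dd[of "n-2" "m+2"] assms s1
      by (intro mult_left_mono) auto
    moreover have "2/t*D \<le> 2/t*Dd" unfolding D_def Dd_def using ee_le_dd[of "n-3" "m+1"] assms t3
      by (intro mult_left_mono) auto
    moreover have "4/(t*u)*F \<le> 4/(t*u)*Fd" unfolding F_def Fd_def using ee_le_dd[of "n-3" "m-1"] assms t3 u1
      by (intro mult_left_mono) auto
    ultimately show ?thesis by linarith
  qed
  have D0: "Ed = (s+2)/t*Ad + Bd"
    using dd_rec_inst[of n m "n-1" "m-1" "m+1" s t] assms
    unfolding Ed_def Ad_def Bd_def s_def t_def by simp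
  have D1: "Bd = s/t*Gd + Cd"
    using dd_rec_inst[of "n-1" "m+1" "n-2" m "m+2" "s-2" t] assms
    unfolding Bd_def Cd_def Gd_def s_def t_def by (simp add: algebra_simps)
  have D2: "Gd = s/u*Fd + Dd"
    using dd_rec_inst[of "n-2" m "n-3" "m-1" "m+1" "s-2" u] assms
    unfolding Gd_def Dd_def Fd_def s_def u_def by (simp add: algebra_simps)
  have part4: "(s+2)/t*Ad + (s-2)/s*Bd + 2/s*Cd + 2/t*Dd + 4/(t*u)*Fd \<le> Ed"
  proof -
    have idd: "Ed = (s+2)/t*Ad + (s-2)/s*Bd + 2/s*Cd + 2/t*Dd + 4/(t*u)*Fd + (2*s-4)/(t*u)*Fd"
      using d_id[of s t u Ed "(s+2)/t" Ad Bd Gd Cd Fd Dd] D0 D1 D2 s1 t3 u1 by simp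
    have "0 \<le> (2*s-4)/(t*u)*Fd"
    proof (cases "2 \<le> s")
      case True
      then show ?thesis using t3 u1 dd_nonneg[of "n-3" "m-1"] unfolding Fd_def by simp
    next
      case False
      then have "n - m < 2" unfolding s_def by simp
      then show ?thesis unfolding Fd_def using dd_zero[of "n-3" "m-1"] assms by simp
    qed
    then show ?thesis using idd by linarith
  qed
  show ?thesis unfolding cf0 cf1 cf2 cf3 cf4 cf5
    using part1 part2 part3 part4 unfolding E_def A_def B_def C_def D_def F_def Ad_def Bd_def Cd_def Dd_def Fd_def Ed_def
    by blast
qed
end
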